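(* Let $G$ be a graph, $t$ an integer and $k$ a nonnegative integer. For a set of vertices $X$, let $E_X$ denote the set of all pairs $\{u,v\}$ with $u,v\in X$, $u\neq v$. Start with $\mathcal{F}=\{E_X : X \text{ is a clique of size } t \text{ in } G\}$ and repeatedly apply the following rule until it is no longer applicable: if there is an edge $\{x,y\}$ of $G$ such that $\mathcal{F}_{xy}=\{X\subseteq V(G)\setminus\{x,y\} : E_{X\cup\{x,y\}}\in\mathcal{F}\}$ satisfies $|\mathcal{F}_{xy}|>2\cdot(t-2)!\cdot k^{t-2}$, find distinct sets $X_1,\ldots,X_{k+1}\in\mathcal{F}_{xy}$ forming a sunflower with core $Y$, remove from $\mathcal{F}$ every set $E_Z$ with $Y\cup\{x,y\}\subseteq Z$, and add $E_{Y\cup\{x,y\}}$ to $\mathcal{F}$. Let $\mathcal{F}'$ be the resulting family. Build a graph $G'=(V',E')$ as follows: start with $V'=E'=\emptyset$; for every $E_X\in\mathcal{F}'$, if $|X|=t$ set $V'\gets V'\cup X$ and $E'\gets E'\cup E_X$; if $|X|<t$, let $V_X$ be a set of $t-|X|$ new vertices and set $V'\gets V'\cup X\cup V_X$ and $E'\gets E'\cup E_{X\cup V_X}$. Then $(G,k)$ is a yes-instance of $K_t$-free edge deletion if and only if $(G',k)$ is a yes-instance of $K_t$-free edge deletion.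
   Context: In the $K_t$-free edge deletion problem, the input is a graph $G$ and an integer $k$, and the question is whether there is a set of at most $k$ edges of $G$ whose removal leaves a graph with no clique on $t$ vertices. Distinct sets $S_1,\ldots,S_p$ form a sunflower with core $Y$ if $S_i\cap S_j=Y$ for all $i\neq j$ and $S_i\setminus Y\neq\emptyset$ for every $i$; when the rule above is applicable, such a sunflower of $k+1$ sets exists by the sunflower lemma. *)

theory Defs
  imports Main
begin

definition edges_of :: "'a set \<Rightarrow> 'a set set" where
  "edges_of X = {{u, v} | u v. u \<in> X \<and> v \<in> X \<and> u \<noteq> v}"

definition graph :: "'a set \<Rightarrow> 'a set set \<Rightarrow> bool" where
  "graph V E \<longleftrightarrow> finite V \<and> E \<subseteq> edges_of V"

definition is_clique :: "'a set \<Rightarrow> 'a set set \<Rightarrow> 'a set \<Rightarrow> bool" where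
  "is_clique V E X \<longleftrightarrow> X \<subseteq> V \<and> edges_of X \<subseteq> E"

definition Kt_free :: "'a set \<Rightarrow> 'a set set \<Rightarrow> nat \<Rightarrow> bool" where
  "Kt_free V E t \<longleftrightarrow> \<not> (\<exists>X. is_clique V E X \<and> card X = t)"

definition Kt_free_edge_deletion_yes :: "'a set \<Rightarrow> 'a set set \<Rightarrow> nat \<Rightarrow> nat \<Rightarrow> bool" where
  "Kt_free_edge_deletion_yes V E t k \<longleftrightarrow>
     (\<exists>S. S \<subseteq> E \<and> finite S \<and> card S \<le> k \<and> Kt_free V (E - S) t)"

text \<open>Sunflower with core Y (core contained in every petal, as produced by the sunflower lemma).\<close>
definition sunflower :: "'a set set \<Rightarrow> 'a set \<Rightarrow> bool" where
  "sunflower S Y \<longleftrightarrow>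
     (\<forall>A\<in>S. \<forall>B\<in>S. A \<noteq> B \<longrightarrow> A \<inter> B = Y) \<and> (\<forall>A\<in>S. Y \<subseteq> A \<and> A - Y \<noteq> {})"

text \<open>The family F of edge sets E_X is represented by the family of the vertex sets X.\<close>
definition initial_family :: "'a set \<Rightarrow> 'a set set \<Rightarrow> nat \<Rightarrow> 'a set set" where
  "initial_family V E t = {X. is_clique V E X \<and> card X = t}"

definition link_family :: "'a set \<Rightarrow> 'a set set \<Rightarrow> 'a \<Rightarrow> 'a \<Rightarrow> 'a set set" where
  "link_family V F x y = {X. X \<subseteq> V - {x, y} \<and> X \<union> {x, y} \<in> F}"

definition rule_bound :: "nat \<Rightarrow> nat \<Rightarrow> nat" where
  "rule_bound t k = 2 * fact (t - 2) * k ^ (t - 2)"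

definition rule_applicable :: "'a set \<Rightarrow> 'a set set \<Rightarrow> nat \<Rightarrow> nat \<Rightarrow> 'a set set \<Rightarrow> bool" where
  "rule_applicable V E t k F \<longleftrightarrow>
     (\<exists>x y. {x, y} \<in> E \<and> card (link_family V F x y) > rule_bound t k)"

definition rule_step :: "'a set \<Rightarrow> 'a set set \<Rightarrow> nat \<Rightarrow> nat \<Rightarrow> 'a set set \<Rightarrow> 'a set set \<Rightarrow> bool" where
  "rule_step V E t k F F' \<longleftrightarrow>
     (\<exists>x y. {x, y} \<in> E \<and> card (link_family V F x y) > rule_bound t k \<and>
        (\<exists>S Y. S \<subseteq> link_family V F x y \<and> card S = k + 1 \<and> sunflower S Y \<and>
               F' = {Z \<in> F. \<not> (Y \<union> {x, y} \<subseteq> Z)} \<union> {Y \<union> {x, y}}))"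

text \<open>The graph G' built from the final family: original vertices Inl v, and for each
  X in the family the t - |X| new vertices Inr (X, i), i < t - |X|.\<close>
definition extended_set :: "nat \<Rightarrow> 'a set \<Rightarrow> ('a + ('a set \<times> nat)) set" where
  "extended_set t X = Inl ` X \<union> {Inr (X, i) | i. i < t - card X}"

definition kernel_V :: "nat \<Rightarrow> 'a set set \<Rightarrow> ('a + ('a set \<times> nat)) set" where
  "kernel_V t F = (\<Union>X\<in>F. extended_set t X)"

definition kernel_E :: "nat \<Rightarrow> 'a set set \<Rightarrow> ('a + ('a set \<times> nat)) set set" where
  "kernel_E t F = (\<Union>X\<in>F. edges_of (extended_set t X))"

end

theory Submission
  imports Defs
begin

definition hits :: "'a set set \<Rightarrow> 'a set set \<Rightarrow> bool" where
  "hits S F \<longleftrightarrow> (\<forall>Z\<in>F. S \<inter> edges_of Z \<noteq> {})"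

definition kinv :: "'a set \<Rightarrow> 'a set set \<Rightarrow> nat \<Rightarrow> nat \<Rightarrow> 'a set set \<Rightarrow> bool" where
  "kinv V E t k F \<longleftrightarrow>
    (\<forall>Z\<in>F. Z \<subseteq> V \<and> edges_of Z \<subseteq> E \<and> finite Z \<and> card Z \<le> t \<and> (card Z = t \<or> 2 \<le> card Z)) \<and>
    (\<forall>S. S \<subseteq> E \<longrightarrow> finite S \<longrightarrow> card S \<le> k \<longrightarrow> (hits S F \<longleftrightarrow> hits S (initial_family V E t)))"

lemma edges_of_mono: "X \<subseteq> Y \<Longrightarrow> edges_of X \<subseteq> edges_of Y"
  unfolding edges_of_def by blast

lemma edge_sub: "e \<in> edges_of X \<Longrightarrow> e \<subseteq> X"
  unfolding edges_of_def by blast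

lemma edge_move: "e \<in> edges_of A \<Longrightarrow> e \<subseteq> B \<Longrightarrow> e \<in> edges_of B"
  unfolding edges_of_def by blast

lemma edges_of_ne:
  assumes "2 \<le> card X" shows "edges_of X \<noteq> {}"
proof -
  have fin: "finite X" using assms card.infinite by fastforce
  have "X \<noteq> {}" using assms by auto
  then obtain u where u: "u \<in> X" by auto
  have c1: "card (X - {u}) \<ge> 1" using assms u fin by simp
  have "0 < card (X - {u})" using c1 by simp
  then have "X - {u} \<noteq> {}" using card_gt_0_iff by blast
  then obtain v where "v \<in> X" "v \<noteq> u" by auto
  then have "{u, v} \<in> edges_of X" using u unfolding edges_of_def by blast
  then show ?thesis by auto
qed

lemma kt_hits: "Kt_free V (E - S) t \<longleftrightarrow> hits S (initial_family V E t)"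
  unfolding Kt_free_def hits_def initial_family_def is_clique_def by blast

lemma init_inv:
  assumes "graph V E" shows "kinv V E t k (initial_family V E t)"
  using assms unfolding kinv_def initial_family_def is_clique_def graph_def
  by (auto intro: finite_subset)

lemma step_inv:
  assumes g: "graph V E" and inv: "kinv V E t k F" and st: "rule_step V E t k F F2"
  shows "kinv V E t k F2"
proof -
  from st obtain x y Sf Y where xy: "{x,y} \<in> E" and sub: "Sf \<subseteq> link_family V F x y"
    and cS: "card Sf = k+1" and sf: "sunflower Sf Y"
    and F2: "F2 = {Z \<in> F. \<not> Y \<union> {x,y} \<subseteq> Z} \<union> {Y \<union> {x,y}}"
    unfolding rule_step_def by blast
  have I1: "\<forall>Z\<in>F. Z \<subseteq> V \<and> edges_of Z \<subseteq> E \<and> finite Z \<and> card Z \<le> t \<and> (card Z = t \<or> 2 \<le> card Z)"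
    using inv[unfolded kinv_def, THEN conjunct1] .
  have I2: "\<forall>S. S \<subseteq> E \<longrightarrow> finite S \<longrightarrow> card S \<le> k \<longrightarrow> (hits S F \<longleftrightarrow> hits S (initial_family V E t))"
    using inv[unfolded kinv_def, THEN conjunct2] .
  have "{x,y} \<in> edges_of V" using xy g unfolding graph_def by blast
  then obtain u v where uv: "{x,y} = {u,v}" "u \<noteq> v" unfolding edges_of_def by blast
  have xny: "x \<noteq> y"
  proof
    assume "x = y"
    then have "{u,v} = {x}" using uv by simp
    then have "u = x" "v = x" by blast+
    then show False using uv by simp
  qed
  have "Sf \<noteq> {}" using cS by auto
  then obtain A where A: "A \<in> Sf" by auto
  have AF: "A \<union> {x,y} \<in> F" and Adisj: "A \<subseteq> V - {x,y}"
    using A sub unfolding link_family_def by auto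
  have YA: "Y \<subseteq> A" using sf A unfolding sunflower_def by auto
  let ?C = "Y \<union> {x,y}"
  have CA: "?C \<subseteq> A \<union> {x,y}" using YA by auto
  note Aall = bspec[OF I1 AF]
  have Ap1: "A \<union> {x,y} \<subseteq> V" using Aall by (rule conjunct1)
  have Ap2: "edges_of (A \<union> {x,y}) \<subseteq> E" using Aall[THEN conjunct2] by (rule conjunct1)
  have Ap3: "finite (A \<union> {x,y})" using Aall[THEN conjunct2, THEN conjunct2] by (rule conjunct1)
  have Ap4: "card (A \<union> {x,y}) \<le> t" using Aall[THEN conjunct2, THEN conjunct2, THEN conjunct2] by (rule conjunct1)
  note Ap = Ap1 Ap2 Ap3 Ap4
  have finC: "finite ?C" using Ap(3) CA finite_subset by blast
  have c1: "card ?C \<le> t" using card_mono[OF Ap(3) CA] Ap(4) by linarith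
  have c2: "2 \<le> card ?C"
  proof -
    have "card {x,y} \<le> card ?C" using finC by (intro card_mono) auto
    then show ?thesis using xny by simp
  qed
  have c3: "?C \<subseteq> V" "edges_of ?C \<subseteq> E"
    using Ap CA edges_of_mono by blast+
  have part1: "\<forall>Z\<in>F2. Z \<subseteq> V \<and> edges_of Z \<subseteq> E \<and> finite Z \<and> card Z \<le> t \<and> (card Z = t \<or> 2 \<le> card Z)"
  proof
    fix Z assume "Z \<in> F2"
    then have "Z \<in> F \<or> Z = ?C" unfolding F2 by blast
    then show "Z \<subseteq> V \<and> edges_of Z \<subseteq> E \<and> finite Z \<and> card Z \<le> t \<and> (card Z = t \<or> 2 \<le> card Z)"
      using I1 c1 c2 c3 finC by blast
  qed
  have part2: "hits S F2 \<longleftrightarrow> hits S (initial_family V E t)"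
    if S: "S \<subseteq> E" "finite S" "card S \<le> k" for S
  proof -
    have core: "S \<inter> edges_of ?C \<noteq> {}" if h: "hits S F"
    proof (rule ccontr)
      assume n: "\<not> S \<inter> edges_of ?C \<noteq> {}"
      have "\<forall>P\<in>Sf. \<exists>e. e \<in> S \<inter> edges_of (P \<union> {x,y})"
        using h sub unfolding hits_def link_family_def by blast
      then obtain gg where gg: "\<forall>P\<in>Sf. gg P \<in> S \<inter> edges_of (P \<union> {x,y})" by metis
      have "inj_on gg Sf"
      proof (rule inj_onI)
        fix P Q assume P: "P \<in> Sf" and Q: "Q \<in> Sf" and eq: "gg P = gg Q"
        show "P = Q"
        proof (rule ccontr)
          assume "P \<noteq> Q"
          then have PQ: "P \<inter> Q = Y" using sf P Q unfolding sunflower_def by blast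
          have d: "P \<inter> {x,y} = {}" "Q \<inter> {x,y} = {}" using sub P Q unfolding link_family_def by auto
          have "gg P \<subseteq> (P \<union> {x,y}) \<inter> (Q \<union> {x,y})"
            using gg P Q eq edge_sub by (metis IntD2 le_infI)
          also have "\<dots> = ?C" using PQ d by auto
          finally have "gg P \<in> edges_of ?C" using gg P edge_move by blast
          then show False using n gg P by blast
        qed
      qed
      moreover have "gg ` Sf \<subseteq> S" using gg by blast
      ultimately have "card Sf \<le> card S" using card_inj_on_le S(2) by blast
      then show False using cS S(3) by linarith
    qed
    have "hits S F2 \<longleftrightarrow> hits S F"
    proof
      assume h: "hits S F"
      show "hits S F2" using core[OF h] h unfolding hits_def F2 by auto
    next
      assume h: "hits S F2"
      have hc: "S \<inter> edges_of ?C \<noteq> {}" using h unfolding hits_def F2 by auto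
      show "hits S F" unfolding hits_def
      proof
        fix Z assume Z: "Z \<in> F"
        show "S \<inter> edges_of Z \<noteq> {}"
        proof (cases "?C \<subseteq> Z")
          case True then show ?thesis using hc edges_of_mono by blast
        next
          case False then show ?thesis using h Z unfolding hits_def F2 by auto
        qed
      qed
    qed
    then show ?thesis using I2 S by blast
  qed
  show ?thesis unfolding kinv_def using part1 part2 by blast
qed

lemma reach_inv:
  assumes g: "graph V E" and r: "(rule_step V E t k)\<^sup>*\<^sup>* (initial_family V E t) F'"
  shows "kinv V E t k F'"
  using r
proof (induction rule: rtranclp_induct)
  case base then show ?case using init_inv[OF g] .
next
  case (step y z) then show ?case using step_inv[OF g] by blast
qed

lemma card_ext:
  assumes "finite X" "card X \<le> t"
  shows "finite (extended_set t X) \<and> card (extended_set t X) = t"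
proof -
  define R :: "('a + ('a set \<times> nat)) set" where "R = {Inr (X, i) | i. i < t - card X}"
  define L :: "('a + ('a set \<times> nat)) set" where "L = Inl ` X"
  have ES: "extended_set t X = L \<union> R" unfolding extended_set_def L_def R_def ..
  have eq: "R = (\<lambda>i. Inr (X, i)) ` {..< t - card X}" unfolding R_def by auto
  have c2: "card R = t - card X"
    unfolding eq by (subst card_image) (auto simp: inj_on_def)
  have c1: "card L = card X" unfolding L_def by (simp add: card_image)
  have d: "L \<inter> R = {}" unfolding L_def R_def by auto
  have f: "finite R" unfolding eq by simp
  have fL: "finite L" unfolding L_def using assms(1) by simp
  have "card (L \<union> R) = card L + card R" using card_Un_disjoint[OF fL f d] .
  also have "\<dots> = t" using c1 c2 assms(2) by linarith
  finally show ?thesis unfolding ES using f fL by simp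
qed

lemma inl_ext[simp]: "Inl u \<in> extended_set t X \<longleftrightarrow> u \<in> X"
  unfolding extended_set_def by auto

lemma inr_ext[simp]: "Inr (Y, i) \<in> extended_set t X \<longleftrightarrow> Y = X \<and> i < t - card X"
  unfolding extended_set_def by auto

lemma kv_inl: "Inl u \<in> kernel_V t F \<Longrightarrow> \<exists>X\<in>F. u \<in> X"
  unfolding kernel_V_def by auto

lemma kv_inr: "Inr (X, i) \<in> kernel_V t F \<Longrightarrow> X \<in> F \<and> i < t - card X"
  unfolding kernel_V_def by auto

lemma ke_inl:
  assumes "e \<in> kernel_E t F" "e \<subseteq> range Inl"
  shows "\<exists>X\<in>F. Inl -` e \<in> edges_of X"
proof -
  obtain X where X: "X \<in> F" "e \<in> edges_of (extended_set t X)" using assms(1) unfolding kernel_E_def by auto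
  then obtain a b where ab: "e = {a, b}" "a \<in> extended_set t X" "b \<in> extended_set t X" "a \<noteq> b"
    unfolding edges_of_def by auto
  obtain u v where uv: "a = Inl u" "b = Inl v" using ab assms(2) by auto
  have "Inl -` e = {u, v}" using ab uv by auto
  moreover have "{u, v} \<in> edges_of X" using ab uv unfolding edges_of_def by auto
  ultimately show ?thesis using X by auto
qed

lemma ke_inr:
  assumes "e \<in> kernel_E t F" "Inr (X, i) \<in> e"
  shows "X \<in> F \<and> i < t - card X \<and> e \<subseteq> extended_set t X"
proof -
  obtain X' where X: "X' \<in> F" "e \<in> edges_of (extended_set t X')" using assms(1) unfolding kernel_E_def by auto
  then have "e \<subseteq> extended_set t X'" using edge_sub by blast
  then have "X' = X" "i < t - card X" using assms(2) by auto
  then show ?thesis using X \<open>e \<subseteq> extended_set t X'\<close> by auto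
qed

theorem lemma4:
  fixes V :: "'a set" and E :: "'a set set" and t k :: nat and F' :: "'a set set"
  assumes "graph V E"
    and "(rule_step V E t k)\<^sup>*\<^sup>* (initial_family V E t) F'"
    and "\<not> rule_applicable V E t k F'"
  shows "Kt_free_edge_deletion_yes V E t k \<longleftrightarrow>
         Kt_free_edge_deletion_yes (kernel_V t F') (kernel_E t F') t k"
proof -
  have inv: "kinv V E t k F'" using reach_inv assms(1,2) by blast
  have P1: "\<And>Z. Z \<in> F' \<Longrightarrow> Z \<subseteq> V \<and> edges_of Z \<subseteq> E \<and> finite Z \<and> card Z \<le> t \<and> (card Z = t \<or> 2 \<le> card Z)"
    using inv[unfolded kinv_def, THEN conjunct1] by (rule bspec)
  have P2: "\<And>S. S \<subseteq> E \<Longrightarrow> finite S \<Longrightarrow> card S \<le> k \<Longrightarrow> hits S F' \<longleftrightarrow> Kt_free V (E - S) t"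
  proof -
    fix S :: "'a set set" assume "S \<subseteq> E" "finite S" "card S \<le> k"
    then have "hits S F' \<longleftrightarrow> hits S (initial_family V E t)"
      using inv[unfolded kinv_def, THEN conjunct2] by blast
    then show "hits S F' \<longleftrightarrow> Kt_free V (E - S) t" using kt_hits by blast
  qed
  let ?V = "kernel_V t F'" and ?E = "kernel_E t F'"
  have ext: "\<And>X. X \<in> F' \<Longrightarrow> finite (extended_set t X) \<and> card (extended_set t X) = t
      \<and> extended_set t X \<subseteq> ?V \<and> edges_of (extended_set t X) \<subseteq> ?E"
  proof -
    fix X assume X: "X \<in> F'"
    have "finite X" "card X \<le> t" using P1[OF X] by blast+
    then have "finite (extended_set t X) \<and> card (extended_set t X) = t" by (rule card_ext)
    moreover have "extended_set t X \<subseteq> ?V" unfolding kernel_V_def using X by blast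
    moreover have "edges_of (extended_set t X) \<subseteq> ?E" unfolding kernel_E_def using X by blast
    ultimately show "finite (extended_set t X) \<and> card (extended_set t X) = t
      \<and> extended_set t X \<subseteq> ?V \<and> edges_of (extended_set t X) \<subseteq> ?E" by blast
  qed
  show ?thesis
  proof
    assume "Kt_free_edge_deletion_yes V E t k"
    then obtain S where S: "S \<subseteq> E" "finite S" "card S \<le> k" "Kt_free V (E - S) t"
      unfolding Kt_free_edge_deletion_yes_def by blast
    have hS: "hits S F'" using P2 S by blast
    define S' where "S' = (image Inl) ` S \<inter> ?E"
    have fS': "finite S'" unfolding S'_def using S(2) by simp
    have cS': "card S' \<le> k"
    proof -
      have "card S' \<le> card ((image Inl) ` S :: ('a + ('a set \<times> nat)) set set)" unfolding S'_def using S(2) by (intro card_mono) auto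
      also have "\<dots> \<le> card S" using card_image_le S(2) by blast
      finally show ?thesis using S(3) by linarith
    qed
    have "Kt_free ?V (?E - S') t"
      unfolding Kt_free_def is_clique_def
    proof
      assume "\<exists>C. (C \<subseteq> ?V \<and> edges_of C \<subseteq> ?E - S') \<and> card C = t"
      then obtain C where C: "C \<subseteq> ?V" "edges_of C \<subseteq> ?E - S'" "card C = t" by blast
      show False
      proof (cases "\<exists>X i. Inr (X, i) \<in> C")
        case True
        then obtain X i where Xi: "Inr (X, i) \<in> C" by blast
        have XF: "X \<in> F'" "i < t - card X" using kv_inr Xi C(1) by blast+
        have CX: "C \<subseteq> extended_set t X"
        proof
          fix c assume c: "c \<in> C"
          show "c \<in> extended_set t X"
          proof (cases "c = Inr (X, i)")
            case True then show ?thesis using XF by simp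
          next
            case False
            then have "{Inr (X, i), c} \<in> edges_of C" using c Xi unfolding edges_of_def by blast
            then have "{Inr (X, i), c} \<in> ?E" using C(2) by blast
            then show ?thesis using ke_inr by blast
          qed
        qed
        have "C = extended_set t X" using card_subset_eq[OF _ CX] ext[OF XF(1)] C(3) by simp
        obtain e where e: "e \<in> S" "e \<in> edges_of X" using hS XF(1) unfolding hits_def by blast
        have "image Inl e \<in> edges_of (Inl ` X :: ('a + ('a set \<times> nat)) set)" using e(2) unfolding edges_of_def by auto
        moreover have "Inl ` X \<subseteq> C" using \<open>C = extended_set t X\<close> by auto
        ultimately have "image Inl e \<in> edges_of C" using edges_of_mono by blast
        then have "image Inl e \<in> ?E" "image Inl e \<notin> S'" using C(2) by auto
        then show False using e(1) unfolding S'_def by auto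
      next
        case False
        then have Cr: "C \<subseteq> range Inl" by (metis obj_sumE subsetI surj_pair rangeI)
        define D where "D = Inl -` C"
        have CD: "C = Inl ` D" using Cr unfolding D_def by auto
        have cD: "card D = t" using C(3) CD card_image by (metis inj_Inl inj_on_subset subset_UNIV)
        have DV: "D \<subseteq> V"
        proof
          fix u assume "u \<in> D"
          then have "Inl u \<in> C" unfolding D_def by simp
          then have "Inl u \<in> ?V" using C(1) by blast
          from kv_inl[OF this] obtain X where X: "X \<in> F'" "u \<in> X" by blast
          have "X \<subseteq> V" using P1[OF X(1)] by blast
          then show "u \<in> V" using X(2) by blast
        qed
        have DE: "edges_of D \<subseteq> E - S"
        proof
          fix e assume e: "e \<in> edges_of D"
          then obtain u v where uv: "e = {u, v}" "u \<in> D" "v \<in> D" "u \<noteq> v" unfolding edges_of_def by auto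
          have "{Inl u, Inl v} \<in> edges_of C" using uv CD unfolding edges_of_def by auto
          then have in1: "{Inl u, Inl v} \<in> ?E" "{Inl u, Inl v} \<notin> S'" using C(2) by auto
          have "Inl -` ({Inl u, Inl v} :: ('a + ('a set \<times> nat)) set) = e" using uv by auto
          obtain X where X: "X \<in> F'" "Inl -` ({Inl u, Inl v} :: ('a + ('a set \<times> nat)) set) \<in> edges_of X"
            using ke_inl[OF in1(1)] by blast
          have "edges_of X \<subseteq> E" using P1[OF X(1)] by blast
          then have "e \<in> E" using X(2) \<open>Inl -` ({Inl u, Inl v} :: ('a + ('a set \<times> nat)) set) = e\<close> by blast
          moreover have "e \<notin> S"
          proof
            assume "e \<in> S"
            then have "(image Inl e :: ('a + ('a set \<times> nat)) set) \<in> (image Inl) ` S" by blast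
            moreover have "(image Inl e :: ('a + ('a set \<times> nat)) set) = {Inl u, Inl v}" using uv by simp
            ultimately show False using in1 unfolding S'_def by simp
          qed
          ultimately show "e \<in> E - S" by blast
        qed
        show False using S(4) DV DE cD unfolding Kt_free_def is_clique_def by blast
      qed
    qed
    moreover have "S' \<subseteq> ?E" unfolding S'_def by blast
    ultimately show "Kt_free_edge_deletion_yes ?V ?E t k"
      unfolding Kt_free_edge_deletion_yes_def using fS' cS' by blast
  next
    assume "Kt_free_edge_deletion_yes ?V ?E t k"
    then obtain S' where S': "S' \<subseteq> ?E" "finite S'" "card S' \<le> k" "Kt_free ?V (?E - S') t"
      unfolding Kt_free_edge_deletion_yes_def by blast
    have hit': "S' \<inter> edges_of (extended_set t X) \<noteq> {}" if X: "X \<in> F'" for X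
      using S'(4) ext[OF X] unfolding Kt_free_def is_clique_def by blast
    define f where "f e' = (if e' \<subseteq> range Inl then Inl -` e'
       else (SOME e. \<exists>X i. Inr (X, i) \<in> e' \<and> e \<in> edges_of X))" for e' :: "('a + ('a set \<times> nat)) set"
    have fr: "\<exists>X i. Inr (X, i) \<in> e' \<and> f e' \<in> edges_of X"
      if e': "e' \<in> ?E" "\<not> e' \<subseteq> range Inl" for e'
    proof -
      obtain z where z: "z \<in> e'" "z \<notin> range Inl" using e'(2) by blast
      then obtain X i where Xi: "Inr (X, i) \<in> e'" by (metis obj_sumE surj_pair rangeI)
      have XF: "X \<in> F'" "i < t - card X" using ke_inr[OF e'(1) Xi] by blast+
      have "card X \<le> t \<and> (card X = t \<or> 2 \<le> card X)" using P1[OF XF(1)] by blast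
      then have "2 \<le> card X" using XF(2) by linarith
      then obtain e where "e \<in> edges_of X" using edges_of_ne by blast
      then have ex: "\<exists>e. \<exists>X i. Inr (X, i) \<in> e' \<and> e \<in> edges_of X" using Xi by blast
      show ?thesis unfolding f_def using e'(2) someI_ex[OF ex] by simp
    qed
    define S where "S = f ` S'"
    have fS: "finite S" unfolding S_def using S'(2) by simp
    have cS: "card S \<le> k" unfolding S_def using card_image_le[OF S'(2), of f] S'(3) by linarith
    have SE: "S \<subseteq> E"
    proof
      fix e assume "e \<in> S"
      then obtain e' where e': "e' \<in> S'" "e = f e'" unfolding S_def by blast
      have e'E: "e' \<in> ?E" using e' S'(1) by blast
      show "e \<in> E"
      proof (cases "e' \<subseteq> range Inl")
        case True
        then have "e = Inl -` e'" using e' unfolding f_def by simp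
        obtain X where X: "X \<in> F'" "Inl -` e' \<in> edges_of X" using ke_inl[OF e'E True] by blast
        have "edges_of X \<subseteq> E" using P1[OF X(1)] by blast
        then show ?thesis using X(2) \<open>e = Inl -` e'\<close> by blast
      next
        case False
        then obtain X i where Xi: "Inr (X, i) \<in> e'" "e \<in> edges_of X" using fr e'E e' by blast
        have "X \<in> F'" using ke_inr[OF e'E Xi(1)] by blast
        then have "edges_of X \<subseteq> E" using P1 by blast
        then show ?thesis using Xi by blast
      qed
    qed
    have "hits S F'" unfolding hits_def
    proof
      fix X assume X: "X \<in> F'"
      obtain e' where e': "e' \<in> S'" "e' \<in> edges_of (extended_set t X)" using hit'[OF X] by blast
      have e'E: "e' \<in> ?E" using e' S'(1) by blast
      have "f e' \<in> edges_of X"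
      proof (cases "e' \<subseteq> range Inl")
        case True
        obtain a b where ab: "e' = {a, b}" "a \<in> extended_set t X" "b \<in> extended_set t X" "a \<noteq> b"
          using e'(2) unfolding edges_of_def by auto
        obtain u v where uv: "a = Inl u" "b = Inl v" using ab True by auto
        have "f e' = {u, v}" using True ab uv unfolding f_def by auto
        then show ?thesis using ab uv unfolding edges_of_def by auto
      next
        case False
        then obtain Y i where Yi: "Inr (Y, i) \<in> e'" "f e' \<in> edges_of Y" using fr e'E by blast
        have "Inr (Y, i) \<in> extended_set t X" using Yi(1) e'(2) edge_sub by blast
        then have "Y = X" by simp
        then show ?thesis using Yi by simp
      qed
      then show "S \<inter> edges_of X \<noteq> {}" using e'(1) unfolding S_def by blast
    qed
    then have "Kt_free V (E - S) t" using P2 SE fS cS by blast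
    then show "Kt_free_edge_deletion_yes V E t k"
      unfolding Kt_free_edge_deletion_yes_def using SE fS cS by blast
  qed
qed

end
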